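(* Let $X$ be a real Banach space with $\operatorname{dens} X = \kappa$. If $D \subseteq X$ is covered by fewer than $\operatorname{cf}(\kappa)$ many hyperplanes of $X$, then $D$ does not contain any overcomplete set for $X$.
   Context: A hyperplane of $X$ is a closed linear subspace of codimension one (the kernel of a non-zero bounded linear functional). $\operatorname{dens}$ denotes the density character and $\operatorname{cf}$ the cofinality. A subset $S$ of a Banach space $X$ with $|S| = \operatorname{dens} X$ is called overcomplete (for $X$) if every subset $\Lambda \subseteq S$ with $|\Lambda| = |S|$ is linearly dense in $X$. *)

theory Defs
  imports "HOL-Analysis.Analysis"
begin


text \<open>Cardinals are handled via the BNF cardinal library of Main:
  the cardinal of a set A is the canonical well-order card_of A, compared by
  ordLeq / ordLess / ordIso.\<close>

definition dens_set :: "'a::topological_space set" where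
  "dens_set = (SOME D. closure D = UNIV \<and> (\<forall>E :: 'a set. closure E = UNIV \<longrightarrow> ordLeq2 (card_of D) (card_of E)))"

definition dens :: "'a::topological_space rel" where
  "dens = card_of (dens_set :: 'a set)"

definition cofinal_set :: "'b rel \<Rightarrow> 'b set \<Rightarrow> bool" where
  "cofinal_set r C \<longleftrightarrow> C \<subseteq> Field r \<and> (\<forall>a\<in>Field r. \<exists>c\<in>C. (a, c) \<in> r)"

definition cof :: "'b rel \<Rightarrow> 'b rel" where
  "cof r = card_of (SOME C. cofinal_set r C \<and> (\<forall>C' :: 'b set. cofinal_set r C' \<longrightarrow> ordLeq2 (card_of C) (card_of C')))"

definition hyperplane :: "'a::real_normed_vector set \<Rightarrow> bool" where
  "hyperplane H \<longleftrightarrow> (\<exists>f :: 'a \<Rightarrow> real. bounded_linear f \<and> f \<noteq> (\<lambda>x. 0) \<and> H = {x. f x = 0})"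

definition overcomplete :: "'a::real_normed_vector set \<Rightarrow> bool" where
  "overcomplete S \<longleftrightarrow> ordIso2 (card_of S) (dens :: 'a rel) \<and>
     (\<forall>L \<subseteq> S. ordIso2 (card_of L) (card_of S) \<longrightarrow> closure (span L) = UNIV)"

end

theory Submission
  imports Defs
begin

unbundle cardinal_syntax

lemma times_ordLess_inf:
  assumes INF: "\<not>finite C" and
    LESS1: "|A| <o |C|" and LESS2: "|B| <o |C|"
  shows "|A \<times> B| <o |C|"
proof(cases "A = {} \<or> B = {}")
  assume Case1: "A = {} \<or> B = {}"
  hence "finite (A \<times> B)" by auto
  thus ?thesis using INF finite_ordLess_infinite[OF card_of_Well_order card_of_Well_order] by (simp add: Field_card_of)
next
  assume Case2: "\<not>(A = {} \<or> B = {})"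
  {assume *: "|C| \<le>o |A \<times> B|"
    hence "\<not>finite (A \<times> B)" using INF card_of_ordLeq_finite by blast
    hence 1: "\<not>finite A \<or> \<not>finite B" using finite_cartesian_product by blast
    {assume Case21: "|A| \<le>o |B|"
      hence "\<not>finite B" using 1 card_of_ordLeq_finite by blast
      hence "|A \<times> B| =o |B|" using Case2 Case21
        by (auto simp: card_of_Times_infinite)
      hence False using LESS2 not_ordLess_ordLeq * ordLeq_ordIso_trans by blast
    }
    moreover
    {assume Case22: "|B| \<le>o |A|"
      hence "\<not>finite A" using 1 card_of_ordLeq_finite by blast
      hence "|A \<times> B| =o |A|" using Case2 Case22
        by (auto simp: card_of_Times_infinite)
      hence False using LESS1 not_ordLess_ordLeq * ordLeq_ordIso_trans by blast
    }
    ultimately have False using ordLeq_total card_of_Well_order[of A]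
        card_of_Well_order[of B] by blast
  }
  thus ?thesis using ordLess_or_ordLeq[of "|A \<times> B|" "|C|"]
      card_of_Well_order[of "A \<times> B"] card_of_Well_order[of "C"] by auto
qed

lemma dens_set_prop:
  "closure (dens_set :: 'a::topological_space set) = UNIV \<and>
   (\<forall>E :: 'a set. closure E = UNIV \<longrightarrow> |dens_set :: 'a set| \<le>o |E| )"
proof -
  let ?R = "{|D| | D :: 'a set. closure D = UNIV}"
  have "|UNIV :: 'a set| \<in> ?R" using closure_UNIV by blast
  hence "?R \<noteq> {}" by blast
  moreover have "\<forall>r\<in>?R. Card_order r" using card_of_Card_order by blast
  ultimately obtain r where "r \<in> ?R" "\<forall>r'\<in>?R. r \<le>o r'"
    using exists_minim_Card_order[of ?R] by blast
  then obtain D :: "'a set" where "closure D = UNIV" "\<forall>E :: 'a set. closure E = UNIV \<longrightarrow> |D| \<le>o |E|"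
    by blast
  then have "\<exists>D :: 'a set. closure D = UNIV \<and> (\<forall>E :: 'a set. closure E = UNIV \<longrightarrow> |D| \<le>o |E| )"
    by blast
  from someI_ex[OF this] show ?thesis unfolding dens_set_def .
qed

lemma cof_prop:
  fixes r :: "'b rel"
  assumes "Well_order r"
  shows "\<exists>C. cof r = |C| \<and> cofinal_set r C \<and> (\<forall>C'. cofinal_set r C' \<longrightarrow> |C| \<le>o |C'| )"
proof -
  let ?R = "{|C| | C :: 'b set. cofinal_set r C}"
  have "cofinal_set r (Field r)"
  proof -
    have "refl_on (Field r) r" using assms unfolding order_on_defs by blast
    thus ?thesis unfolding cofinal_set_def refl_on_def by blast
  qed
  hence "?R \<noteq> {}" by auto
  moreover have "\<forall>r\<in>?R. Card_order r" using card_of_Card_order by blast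
  ultimately obtain q where "q \<in> ?R" "\<forall>r'\<in>?R. q \<le>o r'"
    using exists_minim_Card_order[of ?R] by blast
  then obtain D :: "'b set" where "cofinal_set r D" "\<forall>E. cofinal_set r E \<longrightarrow> |D| \<le>o |E|"
    by blast
  then have "\<exists>D. cofinal_set r D \<and> (\<forall>E. cofinal_set r E \<longrightarrow> |D| \<le>o |E| )"
    by blast
  from someI_ex[OF this] show ?thesis unfolding cof_def by blast
qed

theorem proposition3p10:
  fixes D :: "'a::banach set" and \<H> :: "'a set set"
  assumes "\<forall>H\<in>\<H>. hyperplane H"
    and "D \<subseteq> \<Union>\<H>"
    and "ordLess2 (card_of \<H>) (cof (dens :: 'a rel))"
  shows "\<not> (\<exists>S \<subseteq> D. overcomplete S)"
proof
  assume "\<exists>S \<subseteq> D. overcomplete S"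
  then obtain S where SD: "S \<subseteq> D" and Siso0: "|S| =o (dens :: 'a rel)"
    and Sden: "\<forall>L \<subseteq> S. |L| =o |S| \<longrightarrow> closure (span L) = UNIV"
    unfolding overcomplete_def by blast
  define A where "A = (dens_set :: 'a set)"
  have rA: "(dens :: 'a rel) = |A|" unfolding dens_def A_def ..
  have Siso: "|S| =o |A|" using Siso0 rA by simp
  have Adense: "closure A = UNIV" using dens_set_prop unfolding A_def by blast
  have WA: "Well_order |A|" by (rule card_of_Well_order)
  have CA: "Card_order |A|" by (rule card_of_Card_order)
  obtain C0 where C0: "cof |A| = |C0|" "cofinal_set |A| C0"
    "\<forall>C'. cofinal_set |A| C' \<longrightarrow> |C0| \<le>o |C'|"
    using cof_prop[OF WA] by blast
  have Hless: "|\<H>| <o |C0|" using assms(3) rA C0(1) by simp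
  have "C0 \<subseteq> A" using C0(2) unfolding cofinal_set_def by (simp add: Field_card_of)
  hence "|C0| \<le>o |A|" by (rule card_of_mono1)
  hence HlessA: "|\<H>| <o |A|" by (rule ordLess_ordLeq_trans[OF Hless])
  have "A \<noteq> {}" using Adense by auto
  then obtain g where "bij_betw g S A" using Siso card_of_ordIso by blast
  hence "S \<noteq> {}" using \<open>A \<noteq> {}\<close> by (auto simp: bij_betw_def)
  then obtain s where "s \<in> S" by blast
  then obtain H0 where "H0 \<in> \<H>" using SD assms(2) by blast
  then obtain f0 :: "'a \<Rightarrow> real" where f0: "bounded_linear f0" "f0 \<noteq> (\<lambda>x. 0)"
    using assms(1) unfolding hyperplane_def by blast
  then obtain x0 where "f0 x0 \<noteq> 0" by auto
  hence "x0 \<noteq> 0" using f0(1) linear_simps(3) by metis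
  have "inj (\<lambda>t::real. t *\<^sub>R x0)" using \<open>x0 \<noteq> 0\<close> by (simp add: inj_on_def)
  have "infinite (range (\<lambda>t::real. t *\<^sub>R x0))"
  proof
    assume "finite (range (\<lambda>t::real. t *\<^sub>R x0))"
    hence "finite (UNIV :: real set)" using finite_imageD \<open>inj (\<lambda>t::real. t *\<^sub>R x0)\<close> by blast
    thus False using infinite_UNIV_char_0 by blast
  qed
  hence infU: "infinite (UNIV :: 'a set)" by (meson finite_subset subset_UNIV)
  have infA: "infinite A"
  proof
    assume "finite A"
    hence "closed A" by (rule finite_imp_closed)
    hence "A = UNIV" using Adense closure_closed by metis
    thus False using infU \<open>finite A\<close> by simp
  qed
  have key: "|S \<inter> H| <o |A|" if "H \<in> \<H>" for H
  proof -
    obtain f :: "'a \<Rightarrow> real" where f: "bounded_linear f" "f \<noteq> (\<lambda>x. 0)" "H = {x. f x = 0}"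
      using assms(1) \<open>H \<in> \<H>\<close> unfolding hyperplane_def by blast
    have "continuous_on UNIV f" using f(1) linear_continuous_on by blast
    hence "closed {x \<in> UNIV. f x = 0}" by (rule continuous_closed_preimage_constant[OF _ closed_UNIV])
    hence "closed H" using f(3) by simp
    have "subspace H" using f(1,3) by (auto simp: subspace_def linear_simps)
    hence "span (S \<inter> H) \<subseteq> H" by (simp add: span_minimal)
    hence "closure (span (S \<inter> H)) \<subseteq> H" using \<open>closed H\<close> closure_minimal by blast
    moreover have "H \<noteq> UNIV" using f by auto
    ultimately have "\<not> |S \<inter> H| =o |S|"
    proof (intro notI)
      assume "|S \<inter> H| =o |S|"
      hence "closure (span (S \<inter> H)) = UNIV" using Sden by blast
      thus False using \<open>closure (span (S \<inter> H)) \<subseteq> H\<close> \<open>H \<noteq> UNIV\<close> by blast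
    qed
    moreover have "|S \<inter> H| \<le>o |S|" by (rule card_of_mono1) blast
    ultimately have "|S \<inter> H| <o |S|" using ordLeq_iff_ordLess_or_ordIso by blast
    thus ?thesis using Siso ordLess_ordIso_trans by blast
  qed
  have "\<exists>a\<in>A. |S \<inter> H| \<le>o |underS |A| a|" if HH: "H \<in> \<H>" for H
  proof -
    obtain a where a: "a \<in> Field |A|" "|S \<inter> H| =o Restr |A| (underS |A| a)"
      using iffD1[OF ordLess_iff_ordIso_Restr[OF WA card_of_Well_order] key[OF HH]] by blast
    have "|Field |S \<inter> H|| \<le>o |Field (Restr |A| (underS |A| a))|"
      by (rule card_of_mono2[OF ordIso_imp_ordLeq[OF a(2)]])
    moreover have "|Field (Restr |A| (underS |A| a))| \<le>o |underS |A| a|"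
      by (rule card_of_mono1[OF Field_Restr_subset])
    ultimately have "|Field |S \<inter> H|| \<le>o |underS |A| a|" by (rule ordLeq_transitive)
    hence "|S \<inter> H| \<le>o |underS |A| a|" by (simp only: Field_card_of)
    thus ?thesis using a(1) unfolding Field_card_of by blast
  qed
  hence "\<exists>a. \<forall>H\<in>\<H>. a H \<in> A \<and> |S \<inter> H| \<le>o |underS |A| (a H)|"
    by (intro bchoice) blast
  then obtain a where a: "\<forall>H\<in>\<H>. a H \<in> A \<and> |S \<inter> H| \<le>o |underS |A| (a H)|"
    by blast
  define T where "T = a ` \<H>"
  have "|T| \<le>o |\<H>|" unfolding T_def by (rule card_of_image)
  have "\<not> cofinal_set |A| T"
  proof
    assume "cofinal_set |A| T"
    hence "|C0| \<le>o |T|" using C0(3) by blast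
    hence "|C0| \<le>o |\<H>|" by (rule ordLeq_transitive[OF _ \<open>|T| \<le>o |\<H>|\<close>])
    thus False using Hless not_ordLess_ordLeq by blast
  qed
  moreover have "T \<subseteq> A" using a unfolding T_def by auto
  ultimately obtain b where b: "b \<in> A" "\<forall>c\<in>T. (b, c) \<notin> |A|"
    unfolding cofinal_set_def by (auto simp: Field_card_of)
  have sub: "underS |A| c \<subseteq> underS |A| b" if "c \<in> T" for c
  proof -
    have "c \<in> A" using that \<open>T \<subseteq> A\<close> by blast
    have "(b, c) \<notin> |A|" using b that by blast
    have "refl_on (Field (card_of A)) (card_of A)" using WA unfolding order_on_defs by blast
    hence "(b, b) \<in> |A|" using b(1) unfolding refl_on_def Field_card_of by blast
    hence "c \<noteq> b" using \<open>(b, c) \<notin> |A|\<close> by blast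
    hence cb: "(c, b) \<in> |A|"
    proof -
      have "Total (card_of A)" using WA unfolding order_on_defs by blast
      hence "(c,b) \<in> |A| \<or> (b,c) \<in> |A|" using \<open>c \<in> A\<close> b(1) \<open>c \<noteq> b\<close>
        unfolding total_on_def Field_card_of by blast
      thus ?thesis using \<open>(b, c) \<notin> |A|\<close> by blast
    qed
    show ?thesis
    proof
      fix x assume "x \<in> underS |A| c"
      hence "(x, c) \<in> |A|" "x \<noteq> c" unfolding underS_def by auto
      moreover have "trans (card_of A)" using WA unfolding order_on_defs by blast
      ultimately have "(x, b) \<in> |A|" using cb transD by metis
      moreover have "x \<noteq> b" using \<open>(x, c) \<in> |A|\<close> \<open>(b, c) \<notin> |A|\<close> by blast
      ultimately show "x \<in> underS |A| b" unfolding underS_def by auto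
    qed
  qed
  have HU: "\<forall>H\<in>\<H>. |S \<inter> H| \<le>o |underS |A| b|"
  proof
    fix H assume "H \<in> \<H>"
    hence "a H \<in> T" unfolding T_def by blast
    hence "|underS |A| (a H)| \<le>o |underS |A| b|" using sub card_of_mono1 by blast
    thus "|S \<inter> H| \<le>o |underS |A| b|" using a \<open>H \<in> \<H>\<close> ordLeq_transitive by blast
  qed
  have U: "(\<Union>H\<in>\<H>. S \<inter> H) = S" using SD assms(2) by blast
  from card_of_UNION_Sigma[of "\<lambda>H. S \<inter> H" \<H>] have "|S| \<le>o |SIGMA H:\<H>. S \<inter> H|" unfolding U .
  moreover have "|SIGMA H:\<H>. S \<inter> H| \<le>o |SIGMA H:\<H>. underS |A| b|"
    using HU by (rule card_of_Sigma_mono1)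
  moreover have "|underS |A| b| <o |A|" using card_of_underS[OF CA] b(1) unfolding Field_card_of by blast
  hence "|\<H> \<times> underS |A| b| <o |A|" using times_ordLess_inf infA HlessA by blast
  ultimately have "|S| <o |A|" by (meson ordLeq_transitive ordLeq_ordLess_trans)
  thus False using Siso not_ordLess_ordIso by blast
qed

end
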